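(* Let $T=\mathbf R[[x,y,z,w]]/(x^2+y^2)$ and let $R$ be an N-subring of $T$. Let $\omega,h\in T$ be such that the image of $\omega+zh$ in $T/(x,y)T$ is transcendental over the image of $R$ in $T/(x,y)T$. Then there is a subset $\Psi\subseteq\mathbf R$ with $|\Psi|\le|R|$ such that for every $u\in\mathbf R\setminus\Psi$, the image of $\omega+zh$ in $T/(x,y,z+uw)T$ is transcendental over $R/((x,y,z+uw)T\cap R)$.
   Context: $T=\mathbf R[[x,y,z,w]]/(x^2+y^2)$ with maximal ideal $\mathfrak m$; $x,y,z,w$ also denote their images in $T$. An N-subring of $T$ is a quasi-local unique factorization domain $(R,\mathfrak m\cap R)$ contained in $T$ with $|R|<|\mathbf R|$ such that whenever $t\in T$ is nonzero and $P\in\operatorname{Ass}(T/tT)$, $\operatorname{ht}(P\cap R)\le1$. *)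

theory Defs
  imports "HOL-Algebra.Algebra" "HOL-Algebra.Finite_Extensions"
          "HOL-Computational_Algebra.Formal_Power_Series" "HOL-Library.Extended_Nat"
begin

section \<open>The ring R[[x,y,z,w]] realised as the iterated power series ring R[[x]][[y]][[z]][[w]]\<close>

type_synonym ps4 = "real fps fps fps fps"

definition PS :: "ps4 ring" where
  "PS = \<lparr>carrier = UNIV, monoid.mult = (*), one = 1, ring.zero = 0, ring.add = (+)\<rparr>"

definition vw :: ps4 where "vw = fps_X"
definition vz :: ps4 where "vz = fps_const fps_X"
definition vy :: ps4 where "vy = fps_const (fps_const fps_X)"
definition vx :: ps4 where "vx = fps_const (fps_const (fps_const fps_X))"

definition cst :: "real \<Rightarrow> ps4" where
  "cst c = fps_const (fps_const (fps_const (fps_const c)))"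

definition I0 :: "ps4 set" where
  "I0 = genideal PS {vx * vx + vy * vy}"

definition T :: "ps4 set ring" where
  "T = PS Quot I0"

definition cls :: "ps4 \<Rightarrow> ps4 set" where
  "cls a = I0 +>\<^bsub>PS\<^esub> a"

definition xT :: "ps4 set" where "xT = cls vx"
definition yT :: "ps4 set" where "yT = cls vy"
definition zT :: "ps4 set" where "zT = cls vz"
definition wT :: "ps4 set" where "wT = cls vw"

definition mT :: "ps4 set set" where
  "mT = genideal T {xT, yT, zT, wT}"

definition height :: "('a, 'b) ring_scheme \<Rightarrow> 'a set \<Rightarrow> enat" where
  "height S P = Sup {enat n | n. \<exists>c :: nat \<Rightarrow> 'a set. c n = P \<and>
       (\<forall>i\<le>n. primeideal (c i) S) \<and> (\<forall>i<n. c i \<subset> c (Suc i))}"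

text \<open>Associated primes of the T-module T/tT: primes of the form (tT : a).\<close>
definition Ass_quot :: "('a, 'b) ring_scheme \<Rightarrow> 'a \<Rightarrow> 'a set set" where
  "Ass_quot S t = {P. primeideal P S \<and> (\<exists>a \<in> carrier S.
       P = {r \<in> carrier S. r \<otimes>\<^bsub>S\<^esub> a \<in> cgenideal S t})}"

definition quasi_local :: "('a, 'b) ring_scheme \<Rightarrow> 'a set \<Rightarrow> bool" where
  "quasi_local S M \<longleftrightarrow> maximalideal M S \<and> (\<forall>I. maximalideal I S \<longrightarrow> I = M)"

definition N_subring :: "ps4 set set \<Rightarrow> bool" where
  "N_subring R \<longleftrightarrow>
     subring R T \<and>
     factorial_domain (T\<lparr>carrier := R\<rparr>) \<and>
     quasi_local (T\<lparr>carrier := R\<rparr>) (mT \<inter> R) \<and>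
     |R| <o |UNIV :: real set| \<and>
     (\<forall>t \<in> carrier T. t \<noteq> \<zero>\<^bsub>T\<^esub> \<longrightarrow>
        (\<forall>P \<in> Ass_quot T t. height (T\<lparr>carrier := R\<rparr>) (P \<inter> R) \<le> 1))"

definition img :: "ps4 set set \<Rightarrow> ps4 set set \<Rightarrow> ps4 set set set" where
  "img J S = (\<lambda>a. J +>\<^bsub>T\<^esub> a) ` S"

definition Jxy :: "ps4 set set" where
  "Jxy = genideal T {xT, yT}"

definition Jxyzu :: "real \<Rightarrow> ps4 set set" where
  "Jxyzu u = genideal T {xT, yT, zT \<oplus>\<^bsub>T\<^esub> (cls (cst u) \<otimes>\<^bsub>T\<^esub> wT)}"

end

theory Submission imports Defs begin
unbundle fps_syntax

lemma cring_PS: "cring PS"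
proof -
  have "\<exists>y. x + y = 0" for x :: ps4
    using add.right_inverse by blast
  thus ?thesis
    unfolding PS_def using add.right_inverse
    by unfold_locales (auto simp:algebra_simps Units_def)
qed

interpretation PSr: cring PS by (rule cring_PS)

lemma PS_simps[simp]: "carrier PS = UNIV" "x \<otimes>\<^bsub>PS\<^esub> y = x * y" "x \<oplus>\<^bsub>PS\<^esub> y = x + y"
  "\<one>\<^bsub>PS\<^esub> = 1" "\<zero>\<^bsub>PS\<^esub> = 0"
  by (auto simp: PS_def)

lemma PS_minus[simp]: "\<ominus>\<^bsub>PS\<^esub> x = - x"
  by (metis PSr.add.inv_closed PSr.l_neg PSr.r_neg1 PS_simps(1,3,5) add_minus_cancel iso_tuple_UNIV_I neg_eq_iff_add_eq_0)

lemma I0_eq: "I0 = {c * (vx * vx + vy * vy) | c. True}"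
  unfolding I0_def PSr.cgenideal_eq_genideal[symmetric, simplified] cgenideal_def by simp

lemma ideal_I0: "ideal I0 PS"
  unfolding I0_def by (rule PSr.genideal_ideal) simp


lemma cring_T: "cring T"
  unfolding T_def by (rule ideal.quotient_is_cring[OF ideal_I0 cring_PS])

interpretation Tr: cring T by (rule cring_T)

lemma carrier_T: "carrier T = range cls"
  unfolding T_def FactRing_def A_RCOSETS_def' cls_def by auto

lemma cls_hom: "cls \<in> ring_hom PS T"
  unfolding T_def cls_def[abs_def] using ideal.rcos_ring_hom[OF ideal_I0] .

lemma cls_simps[simp]: "cls (a * b) = cls a \<otimes>\<^bsub>T\<^esub> cls b" "cls (a + b) = cls a \<oplus>\<^bsub>T\<^esub> cls b"
  "cls 1 = \<one>\<^bsub>T\<^esub>" "cls a \<in> carrier T"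
  using ring_hom_mult[OF cls_hom, of a b] ring_hom_add[OF cls_hom, of a b] ring_hom_one[OF cls_hom]
    carrier_T by auto

lemma zero_T: "\<zero>\<^bsub>T\<^esub> = I0" unfolding T_def FactRing_def by simp

lemma cls_zero_iff: "cls a = \<zero>\<^bsub>T\<^esub> \<longleftrightarrow> a \<in> I0"
  unfolding zero_T cls_def
  proof
  assume "I0 +>\<^bsub>PS\<^esub> a = I0"
  moreover have "a \<in> I0 +>\<^bsub>PS\<^esub> a"
    using additive_subgroup.zero_closed[OF ideal.axioms(1)[OF ideal_I0]]
    unfolding a_r_coset_def' by force
  ultimately show "a \<in> I0" by simp
qed (simp add: PSr.a_rcos_zero ideal_I0)

definition ev :: "ps4 \<Rightarrow> real fps fps" where
  "ev a = Abs_fps (\<lambda>j. Abs_fps (\<lambda>i. a $ j $ i $ 0 $ 0))"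

lemma ev_nth[simp]: "ev a $ j $ i = a $ j $ i $ 0 $ 0"
  by (simp add: ev_def)

lemma ev_add[simp]: "ev (a + b) = ev a + ev b"
  by (rule fps_ext, rule fps_ext) simp
lemma ev_diff[simp]: "ev (a - b) = ev a - ev b"
  by (rule fps_ext, rule fps_ext) simp
lemma ev_mult[simp]: "ev (a * b) = ev a * ev b"
  by (rule fps_ext, rule fps_ext) (simp add: fps_mult_nth fps_sum_nth)
lemma ev_one[simp]: "ev 1 = 1"
  by (rule fps_ext, rule fps_ext) (simp add: fps_one_nth)
lemma ev_zero[simp]: "ev 0 = 0"
  by (rule fps_ext, rule fps_ext) simp
lemma ev_vars[simp]: "ev vx = 0" "ev vy = 0" "ev vz = fps_const fps_X" "ev vw = fps_X"
  "ev (cst u) = fps_const (fps_const u)"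
  by (rule fps_ext, rule fps_ext, simp add: vx_def vy_def vz_def vw_def cst_def fps_X_def)+
lemma ev_of_nat[simp]: "ev (of_nat n) = of_nat n"
  by (induct n) (simp_all)

lemma ev_I0: "a \<in> I0 \<Longrightarrow> ev a = 0"
  unfolding I0_eq by auto

lemma shift_decomp: "(c :: 'a::comm_ring_1 fps) $ 0 = 0 \<Longrightarrow> fps_X * fps_shift 1 c = c"
  by (rule fps_ext) (simp add: fps_X_mult_nth)

lemma shift_decomp2: "(c :: real fps fps) $ 0 $ 0 = 0 \<Longrightarrow>
   fps_const (fps_X * fps_shift 1 (c $ 0)) + fps_X * fps_shift 1 c = c"
  apply (rule fps_ext)
  using shift_decomp[of "c $ 0"] by (simp add: fps_X_mult_nth)

lemma ev_zero_decomp: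
  assumes "ev b = 0" shows "\<exists>b1 b2. b = vx * b1 + vy * b2"
proof -
  define b1 :: ps4 where "b1 = Abs_fps (\<lambda>j. Abs_fps (\<lambda>i. fps_const (fps_shift 1 (b $ j $ i $ 0))))"
  define b2 :: ps4 where "b2 = Abs_fps (\<lambda>j. Abs_fps (\<lambda>i. fps_shift 1 (b $ j $ i)))"
  have z: "b $ j $ i $ 0 $ 0 = 0" for j i
    using assms by (metis ev_nth fps_zero_nth)
  have 1: "(vx*b1)$j$i = fps_const (fps_X * fps_shift 1 (b$j$i$0))" for j i
    by (simp add: vx_def b1_def fps_const_mult[symmetric] del: fps_const_mult)
  have 2: "(vy*b2)$j$i = fps_X * fps_shift 1 (b$j$i)" for j i
    by (simp add: vy_def b2_def)
  have "b = vx * b1 + vy * b2"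
    apply (rule fps_ext, rule fps_ext)
    subgoal for j i using shift_decomp2[OF z, of j i] 1[of j i] 2[of j i] by simp
    done
  thus ?thesis by blast
qed

definition L :: "real \<Rightarrow> real fps fps" where
  "L u = fps_const fps_X + fps_const (fps_const u) * fps_X"

lemma L_coeff: "(L u * h) $ j $ i = (if i = 0 then 0 else h $ j $ (i - 1)) + u * (if j = 0 then 0 else h $ (j - 1) $ i)"
proof -
  have "L u * h = fps_const fps_X * h + fps_const (fps_const u) * (fps_X * h)"
    by (simp add: L_def algebra_simps)
  thus ?thesis by (simp add: fps_X_mult_nth)
qed

lemma L_sum: 
  assumes "g = L u * h"
  shows "(\<Sum>i\<le>d. g $ (d - i) $ i * (-u) ^ i) = 0"
proof (cases d)
  case 0 thus ?thesis unfolding assms L_coeff by simp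
next
  case (Suc e)
  have "(\<Sum>i\<le>d. g $ (d - i) $ i * (-u) ^ i) =
     (\<Sum>i\<le>d. (if i = 0 then 0 else h $ (d - i) $ (i - 1)) * (-u) ^ i)
     + (\<Sum>i\<le>d. u * (if d - i = 0 then 0 else h $ (d - i - 1) $ i) * (-u) ^ i)"
    unfolding assms L_coeff by (simp add: sum.distrib algebra_simps)
  also have "(\<Sum>i\<le>d. (if i = 0 then 0 else h $ (d - i) $ (i - 1)) * (-u) ^ i)
      = (\<Sum>i\<le>e. h $ (e - i) $ i * (-u) ^ Suc i)"
    unfolding Suc atMost_atLeast0 sum.atLeast0_atMost_Suc_shift by simp
  also have "(\<Sum>i\<le>d. u * (if d - i = 0 then 0 else h $ (d - i - 1) $ i) * (-u) ^ i)
      = (\<Sum>i\<le>e. - (h $ (e - i) $ i * (-u) ^ Suc i))"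
    unfolding Suc atMost_atLeast0 sum.atLeast0_atMost_Suc
    by (auto intro!: sum.cong simp: Suc_diff_le)
  finally show ?thesis by (simp only: sum_negf add.right_inverse)
qed

lemma L_finite:
  assumes "g \<noteq> 0" shows "finite {u. \<exists>h. g = L u * h}"
proof -
  obtain j i where ji: "g $ j $ i \<noteq> 0"
    using assms by (metis fps_ext fps_zero_nth)
  define d where "d = j + i"
  define c where "c k = g $ (d - k) $ k * (-1) ^ k" for k
  have ck: "c i \<noteq> 0" "i \<le> d" using ji by (auto simp: c_def d_def)
  have "{u. \<exists>h. g = L u * h} \<subseteq> {z. (\<Sum>k\<le>d. c k * z ^ k) = 0}"
  proof safe
    fix u h assume "g = L u * h"
    from L_sum[OF this, of d] show "(\<Sum>k\<le>d. c k * u ^ k) = 0"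
      unfolding c_def power_minus[of u] by (simp only: mult.assoc)
  qed
  thus ?thesis using polyfun_rootbound[of c i d, OF ck] finite_subset by blast
qed

lemma cls_zero[simp]: "cls 0 = \<zero>\<^bsub>T\<^esub>"
  using ring_hom_zero[OF cls_hom PSr.ring_axioms Tr.ring_axioms] by simp

lemma cls_neg[simp]: "\<ominus>\<^bsub>T\<^esub> cls a = cls (- a)"
proof -
  have "cls (- a) \<oplus>\<^bsub>T\<^esub> cls a = \<zero>\<^bsub>T\<^esub>" by (simp flip: cls_simps(2))
  thus ?thesis by (rule Tr.minus_equality) auto
qed

lemma ev_L: "b = vx*b1 + vy*b2 + (vz + cst u * vw)*b3 \<Longrightarrow> ev b = L u * ev b3"
  by (simp add: L_def)

definition Ku :: "real \<Rightarrow> ps4 set" where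
  "Ku u = {vx*b1 + vy*b2 + (vz + cst u * vw)*b3 | b1 b2 b3. True}"

lemma Ku_add: "a \<in> Ku u \<Longrightarrow> b \<in> Ku u \<Longrightarrow> a + b \<in> Ku u"
proof -
  assume "a \<in> Ku u" "b \<in> Ku u"
  then obtain a1 a2 a3 b1 b2 b3 where "a = vx*a1 + vy*a2 + (vz + cst u * vw)*a3"
     "b = vx*b1 + vy*b2 + (vz + cst u * vw)*b3" unfolding Ku_def by blast
  hence "a + b = vx*(a1+b1) + vy*(a2+b2) + (vz + cst u * vw)*(a3+b3)" by (simp add: algebra_simps)
  thus ?thesis unfolding Ku_def by blast
qed

lemma Ku_mult: "a \<in> Ku u \<Longrightarrow> c * a \<in> Ku u"
proof -
  assume "a \<in> Ku u"
  then obtain a1 a2 a3 where "a = vx*a1 + vy*a2 + (vz + cst u * vw)*a3"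
     unfolding Ku_def by blast
  hence "c * a = vx*(c*a1) + vy*(c*a2) + (vz + cst u * vw)*(c*a3)" by (simp add: algebra_simps)
  thus ?thesis unfolding Ku_def by blast
qed

lemma Ku_neg: "a \<in> Ku u \<Longrightarrow> - a \<in> Ku u"
  using Ku_mult[of a u "-1"] by simp

lemma Ku_zero: "0 \<in> Ku u"
  unfolding Ku_def by (rule CollectI, rule exI[of _ 0], rule exI[of _ 0], rule exI[of _ 0]) simp

lemma ideal_Ku: "ideal (cls ` Ku u) T"
proof (rule idealI[OF Tr.ring_axioms])
  show "subgroup (cls ` Ku u) (add_monoid T)"
  proof (rule Tr.add.subgroupI)
    show "cls ` Ku u \<subseteq> carrier T" by auto
    show "cls ` Ku u \<noteq> {}" using Ku_zero by auto
    show "\<ominus>\<^bsub>T\<^esub> a \<in> cls ` Ku u" if "a \<in> cls ` Ku u" for a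
      using that Ku_neg by auto
    show "a \<oplus>\<^bsub>T\<^esub> b \<in> cls ` Ku u" if "a \<in> cls ` Ku u" "b \<in> cls ` Ku u" for a b
      using that Ku_add by (force simp flip: cls_simps(2))
  qed
  show "x \<otimes>\<^bsub>T\<^esub> a \<in> cls ` Ku u" if "a \<in> cls ` Ku u" "x \<in> carrier T" for a x
    using that Ku_mult unfolding carrier_T by (force simp flip: cls_simps(1))
  show "a \<otimes>\<^bsub>T\<^esub> x \<in> cls ` Ku u" if "a \<in> cls ` Ku u" "x \<in> carrier T" for a x
    using that Ku_mult unfolding carrier_T by (force simp flip: cls_simps(1) simp: mult.commute)
qed

lemma gens_carrier[simp]: "xT \<in> carrier T" "yT \<in> carrier T" "zT \<in> carrier T" "wT \<in> carrier T"
  by (simp_all add: xT_def yT_def zT_def wT_def)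

lemma gen_u: "zT \<oplus>\<^bsub>T\<^esub> cls (cst u) \<otimes>\<^bsub>T\<^esub> wT = cls (vz + cst u * vw)"
  by (simp add: zT_def wT_def)

lemma ideal_Jxy: "ideal Jxy T"
  unfolding Jxy_def by (rule Tr.genideal_ideal) simp

lemma ideal_Jxyzu: "ideal (Jxyzu u) T"
  unfolding Jxyzu_def by (rule Tr.genideal_ideal) (simp add: gen_u)

lemma gens_Jxyzu: "xT \<in> Jxyzu u" "yT \<in> Jxyzu u"
  using Tr.genideal_self[of "{xT, yT, zT \<oplus>\<^bsub>T\<^esub> (cls (cst u) \<otimes>\<^bsub>T\<^esub> wT)}"]
  unfolding Jxyzu_def by (auto simp: gen_u)

lemma Jxy_sub: "Jxy \<subseteq> Jxyzu u"
  unfolding Jxy_def by (rule Tr.genideal_minimal[OF ideal_Jxyzu]) (simp add: gens_Jxyzu)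

lemma Jxyzu_sub: "Jxyzu u \<subseteq> cls ` Ku u"
  unfolding Jxyzu_def
proof (rule Tr.genideal_minimal[OF ideal_Ku])
  have "vx \<in> Ku u" unfolding Ku_def by (rule CollectI, rule exI[of _ 1], rule exI[of _ 0], rule exI[of _ 0]) simp
  moreover have "vy \<in> Ku u" unfolding Ku_def by (rule CollectI, rule exI[of _ 0], rule exI[of _ 1], rule exI[of _ 0]) simp
  moreover have "vz + cst u * vw \<in> Ku u" unfolding Ku_def by (rule CollectI, rule exI[of _ 0], rule exI[of _ 0], rule exI[of _ 1]) simp
  ultimately show "{xT, yT, zT \<oplus>\<^bsub>T\<^esub> cls (cst u) \<otimes>\<^bsub>T\<^esub> wT} \<subseteq> cls ` Ku u"
    unfolding gen_u xT_def yT_def by (auto simp del: cls_simps)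
qed

lemma cls_eq_I0: "cls a = cls b \<Longrightarrow> a - b \<in> I0"
proof -
  assume "cls a = cls b"
  have "cls (a - b) = cls a \<oplus>\<^bsub>T\<^esub> cls (- b)" using cls_simps(2)[of a "-b"] by simp
  also have "\<dots> = cls b \<oplus>\<^bsub>T\<^esub> \<ominus>\<^bsub>T\<^esub> cls b" using \<open>cls a = cls b\<close> by simp
  also have "\<dots> = \<zero>\<^bsub>T\<^esub>" by (rule Tr.r_neg) simp
  finally have "cls (a - b) = \<zero>\<^bsub>T\<^esub>" .
  thus ?thesis using cls_zero_iff by simp
qed

lemma Jxyzu_ev: "cls b \<in> Jxyzu u \<Longrightarrow> \<exists>h. ev b = L u * h"
proof -
  assume "cls b \<in> Jxyzu u"
  then obtain b' where b': "b' \<in> Ku u" "cls b = cls b'" using Jxyzu_sub by blast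
  then obtain b1 b2 b3 where "b' = vx*b1 + vy*b2 + (vz + cst u * vw)*b3" unfolding Ku_def by blast
  hence "ev b' = L u * ev b3" by (rule ev_L)
  moreover have "ev (b - b') = 0" using ev_I0 cls_eq_I0[OF b'(2)] by blast
  ultimately have "ev b = L u * ev b3" by (simp add: algebra_simps)
  thus ?thesis by blast
qed

lemma ev_Jxy: "ev b = 0 \<Longrightarrow> cls b \<in> Jxy"
proof -
  assume "ev b = 0"
  then obtain b1 b2 where b: "b = vx * b1 + vy * b2" using ev_zero_decomp by blast
  have gx: "xT \<in> Jxy" "yT \<in> Jxy" using Tr.genideal_self[of "{xT, yT}"] unfolding Jxy_def by auto
  have "cls b = xT \<otimes>\<^bsub>T\<^esub> cls b1 \<oplus>\<^bsub>T\<^esub> yT \<otimes>\<^bsub>T\<^esub> cls b2"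
    by (simp add: b xT_def yT_def)
  also have "\<dots> \<in> Jxy"
    using gx ideal.I_r_closed[OF ideal_Jxy] additive_subgroup.a_closed[OF ideal.axioms(1)[OF ideal_Jxy]]
    by simp
  finally show ?thesis .
qed

lemma lists_level: "infinite A \<Longrightarrow> |{xs \<in> lists A. length xs = n}| \<le>o |A|"
proof (induct n)
  case 0
  hence "A \<noteq> {}" by auto
  then obtain a where "a \<in> A" by blast
  hence "inj_on (\<lambda>_. a) {xs \<in> lists A. length xs = 0} \<and> (\<lambda>_. a) ` {xs \<in> lists A. length xs = 0} \<subseteq> A"
    by (auto simp: inj_on_def)
  thus ?case using card_of_ordLeq by blast
next
  case (Suc n)
  have eq: "{xs \<in> lists A. length xs = Suc n} = (\<lambda>(a, xs). a # xs) ` (SIGMA a:A. {xs \<in> lists A. length xs = n})"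
  proof (intro equalityI subsetI)
    fix xs assume xs: "xs \<in> {xs \<in> lists A. length xs = Suc n}"
    then obtain a ys where "xs = a # ys" by (cases xs) auto
    with xs show "xs \<in> (\<lambda>(a, xs). a # xs) ` (SIGMA a:A. {xs \<in> lists A. length xs = n})"
      by (intro image_eqI[where x="(a, ys)"]) auto
  qed auto
  have "|{xs \<in> lists A. length xs = Suc n}| \<le>o |SIGMA a:A. {xs \<in> lists A. length xs = n}|"
    unfolding eq by (rule card_of_image)
  moreover have "|SIGMA a:A. {xs \<in> lists A. length xs = n}| \<le>o |A|"
    using Suc by (intro card_of_Sigma_ordLeq_infinite) auto
  ultimately show ?case using ordLeq_transitive by blast
qed

lemma lists_card: "infinite A \<Longrightarrow> |lists A| \<le>o |A|"
proof -
  assume inf: "infinite A"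
  have "lists A = (\<Union>n\<in>UNIV. {xs \<in> lists A. length xs = n})" by auto
  moreover have "|\<Union>n\<in>UNIV. {xs \<in> lists A. length xs = n}| \<le>o |A|"
    using inf lists_level infinite_iff_card_of_nat
    by (intro card_of_UNION_ordLeq_infinite) auto
  ultimately show ?thesis by simp
qed

lemma not_Jxy_finite: "a \<in> carrier T \<Longrightarrow> a \<notin> Jxy \<Longrightarrow> finite {u. a \<in> Jxyzu u}"
proof -
  assume "a \<in> carrier T" "a \<notin> Jxy"
  then obtain b where b0: "a = cls b" using carrier_T by blast
  with \<open>a \<notin> Jxy\<close> have b: "a = cls b" "ev b \<noteq> 0" using ev_Jxy by auto
  have "{u. a \<in> Jxyzu u} \<subseteq> {u. \<exists>h. ev b = L u * h}" using Jxyzu_ev b(1) by blast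
  thus ?thesis using L_finite[OF b(2)] finite_subset by blast
qed

lemma R_infinite:
  assumes "subring R T" shows "infinite R"
proof -
  have in_R: "cls (of_nat n) \<in> R" for n
  proof (induct n)
    case 0 thus ?case using subringE(2)[OF assms] by simp
  next
    case (Suc n)
    have "cls (of_nat (Suc n)) = \<one>\<^bsub>T\<^esub> \<oplus>\<^bsub>T\<^esub> cls (of_nat n)"
      by (simp only: of_nat_Suc cls_simps)
    thus ?case using Suc subringE(3,7)[OF assms] by simp
  qed
  have "inj (\<lambda>n. cls (of_nat n))"
  proof (rule injI)
    fix n m assume "cls (of_nat n) = cls (of_nat m)"
    hence "ev (of_nat n - of_nat m) = 0" using cls_eq_I0 ev_I0 by blast
    hence "(of_nat n :: real fps fps) $ 0 $ 0 = of_nat m $ 0 $ 0" by simp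
    thus "n = m" by simp
  qed
  hence "infinite (range (\<lambda>n. cls (of_nat n)))" using range_inj_infinite by blast
  moreover have "range (\<lambda>n. cls (of_nat n)) \<subseteq> R" using in_R by auto
  ultimately show ?thesis using finite_subset by blast
qed

lemma rcos_eq_self_imp:
  assumes "ring S" "ideal I S" "a \<in> carrier S" "I +>\<^bsub>S\<^esub> a = I" shows "a \<in> I"
proof -
  have "\<zero>\<^bsub>S\<^esub> \<in> I" using additive_subgroup.zero_closed[OF ideal.axioms(1)[OF assms(2)]] .
  hence "\<zero>\<^bsub>S\<^esub> \<oplus>\<^bsub>S\<^esub> a \<in> I +>\<^bsub>S\<^esub> a" unfolding a_r_coset_def' by blast
  thus ?thesis using assms ring.ring_simprules(8)[OF assms(1)] by auto
qed

lemma zero_Quot: "\<zero>\<^bsub>S Quot I\<^esub> = I" by (simp add: FactRing_def)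

lemma pi_factor:
  assumes "a \<in> carrier T" "b \<in> carrier T" "Jxy +>\<^bsub>T\<^esub> a = Jxy +>\<^bsub>T\<^esub> b"
  shows "Jxyzu u +>\<^bsub>T\<^esub> a = Jxyzu u +>\<^bsub>T\<^esub> b"
  using assms Tr.quotient_eq_iff_same_a_r_cos[OF ideal_Jxy] Tr.quotient_eq_iff_same_a_r_cos[OF ideal_Jxyzu]
    Jxy_sub by blast

lemma pi_factor_list:
  "set xs \<subseteq> carrier T \<Longrightarrow> set ys \<subseteq> carrier T \<Longrightarrow>
   map (\<lambda>a. Jxy +>\<^bsub>T\<^esub> a) xs = map (\<lambda>a. Jxy +>\<^bsub>T\<^esub> a) ys \<Longrightarrow>
   map (\<lambda>a. Jxyzu u +>\<^bsub>T\<^esub> a) xs = map (\<lambda>a. Jxyzu u +>\<^bsub>T\<^esub> a) ys"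
proof (induct xs arbitrary: ys)
  case Nil thus ?case by simp
next
  case (Cons x xs)
  then obtain y ys' where "ys = y # ys'" by (cases ys) auto
  thus ?case using Cons pi_factor[of x y u] by auto
qed

lemma poly_lift:
  assumes sR: "subring R T"
    and p: "p \<in> carrier ((img (Jxyzu u) R)[X]\<^bsub>T Quot Jxyzu u\<^esub>)"
  shows "\<exists>q. set q \<subseteq> R \<and> map (\<lambda>a. Jxyzu u +>\<^bsub>T\<^esub> a) q = p \<and>
     map (\<lambda>a. Jxy +>\<^bsub>T\<^esub> a) q \<in> carrier ((img Jxy R)[X]\<^bsub>T Quot Jxy\<^esub>)"
proof -
  define Q where "Q = Jxyzu u"
  define \<pi> where "\<pi> = (\<lambda>a. Q +>\<^bsub>T\<^esub> a)"
  define \<pi>' where "\<pi>' = (\<lambda>a. Jxy +>\<^bsub>T\<^esub> a)"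
  have iQ: "ideal Q T" unfolding Q_def by (rule ideal_Jxyzu)
  have RT: "R \<subseteq> carrier T" using subringE(1)[OF sR] .
  have pK: "set p \<subseteq> \<pi> ` R" "p \<noteq> [] \<Longrightarrow> lead_coeff p \<noteq> Q"
    using p unfolding univ_poly_carrier[symmetric] polynomial_def img_def \<pi>_def Q_def zero_Quot by auto
  define lift where "lift c = (SOME r. r \<in> R \<and> c = \<pi> r)" for c
  define q where "q = map lift p"
  have lift: "lift c \<in> R \<and> c = \<pi> (lift c)" if "c \<in> \<pi> ` R" for c
  proof -
    have "\<exists>r. r \<in> R \<and> c = \<pi> r" using that by blast
    thus ?thesis unfolding lift_def by (rule someI_ex)
  qed
  have qR: "set q \<subseteq> R" using pK(1) lift unfolding q_def by auto
  have mq: "map \<pi> q = p" unfolding q_def using pK(1) lift by (induct p) auto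
  have "map \<pi>' q \<in> carrier ((img Jxy R)[X]\<^bsub>T Quot Jxy\<^esub>)"
  proof (cases "q = []")
    case True thus ?thesis by (simp add: univ_poly_zero_closed)
  next
    case False
    have hdq: "hd q \<in> R" using False qR by auto
    have "\<pi> (hd q) \<noteq> Q" using pK(2) mq False by (auto simp: hd_map)
    hence "hd q \<notin> Q" unfolding \<pi>_def using Tr.a_rcos_zero[OF iQ] by blast
    hence "hd q \<notin> Jxy" using Jxy_sub unfolding Q_def by blast
    hence "\<pi>' (hd q) \<noteq> Jxy" unfolding \<pi>'_def using rcos_eq_self_imp[OF Tr.ring_axioms ideal_Jxy] hdq RT by blast
    thus ?thesis
      unfolding univ_poly_carrier[symmetric] polynomial_def
      using False qR by (auto simp: img_def \<pi>'_def hd_map zero_Quot)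
  qed
  thus ?thesis using qR mq unfolding \<pi>_def \<pi>'_def Q_def by blast
qed

lemma step:
  assumes sR: "subring R T" and f: "f \<in> carrier T"
    and tr: "ring.transcendental (T Quot Jxy) (img Jxy R) (Jxy +>\<^bsub>T\<^esub> f)"
    and notin: "\<forall>q1 \<in> lists R. \<forall>q2 \<in> lists R. Tr.eval q1 f \<ominus>\<^bsub>T\<^esub> Tr.eval q2 f \<in> Jxyzu u
         \<longrightarrow> Tr.eval q1 f \<ominus>\<^bsub>T\<^esub> Tr.eval q2 f \<in> Jxy"
  shows "ring.transcendental (T Quot Jxyzu u) (img (Jxyzu u) R) (Jxyzu u +>\<^bsub>T\<^esub> f)"
proof (rule ccontr)
  define Q where "Q = Jxyzu u"
  define \<pi> where "\<pi> = (\<lambda>a. Q +>\<^bsub>T\<^esub> a)"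
  define \<pi>' where "\<pi>' = (\<lambda>a. Jxy +>\<^bsub>T\<^esub> a)"
  have iQ: "ideal Q T" unfolding Q_def by (rule ideal_Jxyzu)
  have rQ: "ring (T Quot Q)" using ideal.quotient_is_cring[OF iQ cring_T] cring.axioms(1) by blast
  have hQ: "ring_hom_ring T (T Quot Q) \<pi>" unfolding \<pi>_def by (rule ideal.rcos_ring_hom_ring[OF iQ])
  have hJ: "ring_hom_ring T (T Quot Jxy) \<pi>'" unfolding \<pi>'_def by (rule ideal.rcos_ring_hom_ring[OF ideal_Jxy])
  have rJ: "ring (T Quot Jxy)" using ideal.quotient_is_cring[OF ideal_Jxy cring_T] cring.axioms(1) by blast
  have RT: "R \<subseteq> carrier T" using subringE(1)[OF sR] .
  assume "\<not> ring.transcendental (T Quot Jxyzu u) (img (Jxyzu u) R) (Jxyzu u +>\<^bsub>T\<^esub> f)"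
  then obtain p1 p2 where p: "p1 \<in> carrier ((img (Jxyzu u) R)[X]\<^bsub>T Quot Jxyzu u\<^esub>)"
     "p2 \<in> carrier ((img (Jxyzu u) R)[X]\<^bsub>T Quot Jxyzu u\<^esub>)" "p1 \<noteq> p2"
     "ring.eval (T Quot Q) p1 (\<pi> f) = ring.eval (T Quot Q) p2 (\<pi> f)"
    unfolding ring.transcendental_def[OF rQ[unfolded Q_def]] inj_on_def Q_def \<pi>_def by blast
  obtain q1 where q1: "set q1 \<subseteq> R" "map \<pi> q1 = p1" "map \<pi>' q1 \<in> carrier ((img Jxy R)[X]\<^bsub>T Quot Jxy\<^esub>)"
    using poly_lift[OF sR p(1)] unfolding \<pi>_def \<pi>'_def Q_def by blast
  obtain q2 where q2: "set q2 \<subseteq> R" "map \<pi> q2 = p2" "map \<pi>' q2 \<in> carrier ((img Jxy R)[X]\<^bsub>T Quot Jxy\<^esub>)"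
    using poly_lift[OF sR p(2)] unfolding \<pi>_def \<pi>'_def Q_def by blast
  have qT: "set q1 \<subseteq> carrier T" "set q2 \<subseteq> carrier T" using q1(1) q2(1) RT by auto
  have e1: "Tr.eval q1 f \<in> carrier T" "Tr.eval q2 f \<in> carrier T"
    using Tr.eval_in_carrier qT f by auto
  have "\<pi> (Tr.eval q1 f) = \<pi> (Tr.eval q2 f)"
    using ring_hom_ring.eval_hom'[OF hQ f qT(1)] ring_hom_ring.eval_hom'[OF hQ f qT(2)] q1(2) q2(2) p(4)
    by simp
  hence "Tr.eval q1 f \<ominus>\<^bsub>T\<^esub> Tr.eval q2 f \<in> Q"
    unfolding \<pi>_def using Tr.quotient_eq_iff_same_a_r_cos[OF iQ e1] by blast
  hence "Tr.eval q1 f \<ominus>\<^bsub>T\<^esub> Tr.eval q2 f \<in> Jxy"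
    using notin q1(1) q2(1) unfolding Q_def by blast
  hence "\<pi>' (Tr.eval q1 f) = \<pi>' (Tr.eval q2 f)"
    unfolding \<pi>'_def using Tr.quotient_eq_iff_same_a_r_cos[OF ideal_Jxy e1] by blast
  hence "ring.eval (T Quot Jxy) (map \<pi>' q1) (\<pi>' f) = ring.eval (T Quot Jxy) (map \<pi>' q2) (\<pi>' f)"
    using ring_hom_ring.eval_hom'[OF hJ f qT(1)] ring_hom_ring.eval_hom'[OF hJ f qT(2)] by simp
  hence "map \<pi>' q1 = map \<pi>' q2"
    using tr q1(3) q2(3) unfolding ring.transcendental_def[OF rJ] inj_on_def \<pi>'_def by blast
  hence "map \<pi> q1 = map \<pi> q2"
    using pi_factor_list[OF qT] unfolding \<pi>_def \<pi>'_def Q_def by blast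
  thus False using q1(2) q2(2) p(3) by simp
qed

lemma finite_le_infinite: "finite Y \<Longrightarrow> infinite B \<Longrightarrow> |Y| \<le>o |B|"
  using ordLess_imp_ordLeq[OF finite_ordLess_infinite[of "|Y|" "|B|"]] by simp

theorem mainTheorem15:
  fixes R :: "ps4 set set" and \<omega> h :: "ps4 set"
  assumes "N_subring R"
    and "\<omega> \<in> carrier T" and "h \<in> carrier T"
    and "ring.transcendental (T Quot Jxy) (img Jxy R)
           (Jxy +>\<^bsub>T\<^esub> (\<omega> \<oplus>\<^bsub>T\<^esub> zT \<otimes>\<^bsub>T\<^esub> h))"
  shows "\<exists>\<Psi> :: real set. |\<Psi>| \<le>o |R| \<and>
           (\<forall>u \<in> UNIV - \<Psi>. ring.transcendental (T Quot Jxyzu u) (img (Jxyzu u) R)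
              (Jxyzu u +>\<^bsub>T\<^esub> (\<omega> \<oplus>\<^bsub>T\<^esub> zT \<otimes>\<^bsub>T\<^esub> h)))"
proof -
  define f where "f = \<omega> \<oplus>\<^bsub>T\<^esub> zT \<otimes>\<^bsub>T\<^esub> h"
  have sR: "subring R T" using assms(1) unfolding N_subring_def by blast
  have inf: "infinite R" by (rule R_infinite[OF sR])
  have RT: "R \<subseteq> carrier T" using subringE(1)[OF sR] .
  have f: "f \<in> carrier T" unfolding f_def using assms(2,3) by simp
  define A where "A = (\<lambda>(q1, q2). Tr.eval q1 f \<ominus>\<^bsub>T\<^esub> Tr.eval q2 f) ` (lists R \<times> lists R)"
  define \<Psi> where "\<Psi> = (\<Union>a \<in> A - Jxy. {u. a \<in> Jxyzu u})"
  have AT: "A \<subseteq> carrier T"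
  proof
    fix a assume "a \<in> A"
    then obtain q1 q2 where "q1 \<in> lists R" "q2 \<in> lists R" "a = Tr.eval q1 f \<ominus>\<^bsub>T\<^esub> Tr.eval q2 f"
      unfolding A_def by blast
    moreover have "set q1 \<subseteq> carrier T" "set q2 \<subseteq> carrier T" using calculation(1,2) RT by auto
    ultimately show "a \<in> carrier T" using Tr.eval_in_carrier[OF _ f] by simp
  qed
  have "|A| \<le>o |lists R \<times> lists R|" unfolding A_def by (rule card_of_image)
  moreover have "|lists R \<times> lists R| \<le>o |R|"
    using lists_card[OF inf] inf by (intro card_of_Sigma_ordLeq_infinite) auto
  ultimately have cA: "|A| \<le>o |R|" using ordLeq_transitive by blast
  have "|\<Psi>| \<le>o |R|"
    unfolding \<Psi>_def
  proof (rule card_of_UNION_ordLeq_infinite[OF inf])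
    show "|A - Jxy| \<le>o |R|" using ordLeq_transitive[OF card_of_mono1[of "A - Jxy" A] cA] by blast
    show "\<forall>a\<in>A - Jxy. |{u. a \<in> Jxyzu u}| \<le>o |R|"
      using not_Jxy_finite AT finite_le_infinite[OF _ inf] by blast
  qed
  moreover have "\<forall>u \<in> UNIV - \<Psi>. ring.transcendental (T Quot Jxyzu u) (img (Jxyzu u) R) (Jxyzu u +>\<^bsub>T\<^esub> f)"
  proof
    fix u assume u: "u \<in> UNIV - \<Psi>"
    show "ring.transcendental (T Quot Jxyzu u) (img (Jxyzu u) R) (Jxyzu u +>\<^bsub>T\<^esub> f)"
    proof (rule step[OF sR f])
      show "ring.transcendental (T Quot Jxy) (img Jxy R) (Jxy +>\<^bsub>T\<^esub> f)"
        using assms(4) unfolding f_def .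
      show "\<forall>q1\<in>lists R. \<forall>q2\<in>lists R. Tr.eval q1 f \<ominus>\<^bsub>T\<^esub> Tr.eval q2 f \<in> Jxyzu u \<longrightarrow>
           Tr.eval q1 f \<ominus>\<^bsub>T\<^esub> Tr.eval q2 f \<in> Jxy"
      proof (intro ballI impI)
        fix q1 q2 assume q: "q1 \<in> lists R" "q2 \<in> lists R"
          "Tr.eval q1 f \<ominus>\<^bsub>T\<^esub> Tr.eval q2 f \<in> Jxyzu u"
        have "Tr.eval q1 f \<ominus>\<^bsub>T\<^esub> Tr.eval q2 f \<in> A" using q(1,2) unfolding A_def by force
        thus "Tr.eval q1 f \<ominus>\<^bsub>T\<^esub> Tr.eval q2 f \<in> Jxy" using u q(3) unfolding \<Psi>_def by blast
      qed
    qed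
  qed
  ultimately show ?thesis unfolding f_def by blast
qed

end
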